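(* Let $\alpha\in(0,1)$ and let $n\ge r\ge 1$ be integers. If $P\in\mathbb{P}_\alpha^{n\times n}$, then for every matrix $M\in\mathbb{R}^{n\times r}$ with $\operatorname{rank}(M)=r$ one has $M^{\mathrm T}PM\in\mathbb{P}_\alpha^{r\times r}$.
   Context: For $\alpha\in(0,1)$ and a positive integer $k$, the set of $k$-dimensional fractional order positive definite matrices is $\mathbb{P}_\alpha^{k\times k}=\Big\{\sin\big(\tfrac{\alpha\pi}{2}\big)X+\cos\big(\tfrac{\alpha\pi}{2}\big)Y:\ X,Y\in\mathbb{R}^{k\times k},\ \begin{bmatrix}X&Y\\-Y&X\end{bmatrix}>0\Big\}$, where "$>0$" means the (symmetric) block matrix is positive definite. *)

theory Defs
  imports "HOL-Analysis.Analysis"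
begin

definition pos_def :: "real^'k^'k \<Rightarrow> bool" where
  "pos_def A \<longleftrightarrow> transpose A = A \<and> (\<forall>x. x \<noteq> 0 \<longrightarrow> x \<bullet> (A *v x) > 0)"

definition block_XY :: "real^'k^'k \<Rightarrow> real^'k^'k \<Rightarrow> real^('k + 'k)^('k + 'k)" where
  "block_XY X Y = (\<chi> i j. case (i, j) of
      (Inl a, Inl b) \<Rightarrow> X $ a $ b
    | (Inl a, Inr b) \<Rightarrow> Y $ a $ b
    | (Inr a, Inl b) \<Rightarrow> - (Y $ a $ b)
    | (Inr a, Inr b) \<Rightarrow> X $ a $ b)"

definition frac_pd :: "real \<Rightarrow> (real^'k^'k) set" where
  "frac_pd \<alpha> = {sin (\<alpha> * pi / 2) *\<^sub>R X + cos (\<alpha> * pi / 2) *\<^sub>R Y | X Y.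
       pos_def (block_XY X Y)}"

end

theory Submission
  imports Defs
begin

lemma sum_UNIV_plus:
  "sum g (UNIV :: ('a::finite + 'b::finite) set) = sum (\<lambda>a. g (Inl a)) UNIV + sum (\<lambda>b. g (Inr b)) UNIV"
  by (subst UNIV_Plus_UNIV[symmetric], subst sum.Plus) (auto simp: o_def)

lemma matrix_add_rdistrib': "((A + B) ** C) = (A ** C) + (B ** (C::real^_^_))"
  by (vector matrix_matrix_mult_def sum.distrib[symmetric] field_simps)

definition bdiag :: "real^'r^'n \<Rightarrow> real^('r+'r)^('n+'n)" where
  "bdiag M = (\<chi> i j. case (i, j) of
      (Inl a, Inl b) \<Rightarrow> M $ a $ b
    | (Inr a, Inr b) \<Rightarrow> M $ a $ b
    | _ \<Rightarrow> 0)"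

lemma block_congr:
  fixes M :: "real^'r^'n"
  shows "block_XY (transpose M ** X ** M) (transpose M ** Y ** M) = transpose (bdiag M) ** block_XY X Y ** bdiag M"
  unfolding vec_eq_iff
proof (intro allI)
  fix i j :: "'r + 'r"
  show "block_XY (transpose M ** X ** M) (transpose M ** Y ** M) $ i $ j = (transpose (bdiag M) ** block_XY X Y ** bdiag M) $ i $ j"
    by (cases i; cases j) (simp_all add: block_XY_def bdiag_def matrix_matrix_mult_def transpose_def sum_UNIV_plus sum_negf)
qed

lemma bdiag_inj:
  fixes M :: "real^'r^'n"
  assumes "inj ((*v) M)" "z \<noteq> 0"
  shows "bdiag M *v z \<noteq> 0"
proof
  assume h: "bdiag M *v z = 0"
  define u where "u = (\<chi> a. z $ Inl a)"
  define v where "v = (\<chi> a. z $ Inr a)"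
  have "M *v u = 0"
  proof -
    { fix a have "(bdiag M *v z) $ Inl a = (M *v u) $ a"
        by (simp add: bdiag_def matrix_vector_mult_def sum_UNIV_plus u_def) }
    then show ?thesis using h by (simp add: vec_eq_iff)
  qed
  moreover have "M *v v = 0"
  proof -
    { fix a have "(bdiag M *v z) $ Inr a = (M *v v) $ a"
        by (simp add: bdiag_def matrix_vector_mult_def sum_UNIV_plus v_def) }
    then show ?thesis using h by (simp add: vec_eq_iff)
  qed
  ultimately have "u = 0" "v = 0" using assms(1) by (metis inj_eq matrix_vector_mult_0_right)+
  then have "z = 0" unfolding u_def v_def vec_eq_iff by (metis sumE zero_index vec_lambda_beta)
  then show False using assms(2) by simp
qed

theorem theorem1:
  fixes \<alpha> :: real and P :: "real^'n^'n" and M :: "real^'r^'n"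
  assumes "0 < \<alpha>" and "\<alpha> < 1"
    and "CARD('r) \<le> CARD('n)"
    and "P \<in> frac_pd \<alpha>"
    and "rank M = CARD('r)"
  shows "transpose M ** P ** M \<in> frac_pd \<alpha>"
proof -
  obtain X Y where P: "P = sin (\<alpha> * pi / 2) *\<^sub>R X + cos (\<alpha> * pi / 2) *\<^sub>R Y"
    and pd: "pos_def (block_XY X Y)" using assms(4) unfolding frac_pd_def by blast
  have inj: "inj ((*v) M)" using assms(5) full_rank_injective by blast
  let ?D = "bdiag M"
  let ?B = "block_XY X Y"
  have eq: "transpose M ** P ** M = sin (\<alpha> * pi / 2) *\<^sub>R (transpose M ** X ** M) + cos (\<alpha> * pi / 2) *\<^sub>R (transpose M ** Y ** M)"
    unfolding P by (simp add: matrix_add_ldistrib matrix_add_rdistrib' matrix_scalar_ac scalar_matrix_assoc)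
  have "pos_def (transpose ?D ** ?B ** ?D)"
    unfolding pos_def_def
  proof
    show "transpose (transpose ?D ** ?B ** ?D) = transpose ?D ** ?B ** ?D"
      using pd unfolding pos_def_def by (simp add: matrix_transpose_mul matrix_mul_assoc)
    show "\<forall>x. x \<noteq> 0 \<longrightarrow> 0 < x \<bullet> ((transpose ?D ** ?B ** ?D) *v x)"
    proof (intro allI impI)
      fix x :: "real^('r+'r)" assume "x \<noteq> 0"
      then have nz: "?D *v x \<noteq> 0" using bdiag_inj inj by blast
      have "x \<bullet> ((transpose ?D ** ?B ** ?D) *v x) = (?D *v x) \<bullet> (?B *v (?D *v x))"
      proof -
        have "(transpose ?D ** ?B ** ?D) *v x = transpose ?D *v (?B *v (?D *v x))"
          by (simp only: matrix_vector_mul_assoc matrix_mul_assoc)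
        also have "\<dots> = (?B *v (?D *v x)) v* ?D" by simp
        finally have "x \<bullet> ((transpose ?D ** ?B ** ?D) *v x) = ((?B *v (?D *v x)) v* ?D) \<bullet> x"
          by (simp add: inner_commute)
        also have "\<dots> = (?B *v (?D *v x)) \<bullet> (?D *v x)" by (rule dot_lmul_matrix)
        finally show ?thesis by (simp add: inner_commute)
      qed
      also have "\<dots> > 0" using pd nz unfolding pos_def_def by blast
      finally show "0 < x \<bullet> ((transpose ?D ** ?B ** ?D) *v x)" .
    qed
  qed
  then have "pos_def (block_XY (transpose M ** X ** M) (transpose M ** Y ** M))"
    by (simp add: block_congr)
  then show ?thesis unfolding eq frac_pd_def by blast
qed

end
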